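(* Let $n\ge1$ and $d\ge1$, and let $w$ be a positive weight vector. Then there is a design $D\subset\mathbb{R}^d$ with $n$ points which minimises $A(w,L)$ among all designs of sample size $n$ and their identifiable staircases; more precisely, the quantity $$A^*(w,n)=\min_{D:\,|D|=n}\ \min_{L\in\mathcal{L}_a(D)}A(w,L)$$ is achieved by a generic design.
   Context: A design $D\subset\mathbb{R}^d$ is a finite set of $n=|D|$ distinct points. A model basis is a finite set $L\subset\mathbb{Z}^d_{\ge 0}$; it is identifiable by $D$ if $|L|=n$ and the matrix $[x^\alpha]_{x\in D,\alpha\in L}$ (with $x^\alpha=\prod_i x_i^{\alpha_i}$) is invertible. $L$ is a staircase if $\alpha\in L$, $\beta\le\alpha$ componentwise imply $\beta\in L$. The aberration is $A(w,L)=\frac1n\sum_{\alpha\in L}\sum_{i=1}^dw_i\alpha_i$. For a term ordering $\succ$, $L(D,\succ)$ is the set of exponents of monomials not divisible by leading terms of elements of the ideal $I(D)$ of polynomials vanishing on $D$; the algebraic fan is $\mathcal{L}_a(D)=\{L(D,\succ):\succ\text{ a term ordering}\}$. A staircase $L$ with $|L|=n$ is a corner cut if some affine hyperplane in $\mathbb{R}^d$ strictly separates $L$ from $\mathbb{Z}^d_{\ge0}\setminus L$. A design with $n$ points is generic if every corner cut staircase of size $n$ in $d$ dimensions is identifiable by it. *)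

theory Defs
  imports Complex_Main
begin

text \<open>Dimension d is the cardinality of a finite index type 'd.
  Points of R^d are functions 'd => real, exponent vectors in Z^d_{>=0} are
  functions 'd => nat (ordered componentwise by the pointwise function order).
  A polynomial in d variables with real coefficients is a finitely supported
  coefficient function from exponent vectors to reals.\<close>

definition mono :: "('d::finite \<Rightarrow> real) \<Rightarrow> ('d \<Rightarrow> nat) \<Rightarrow> real" where
  "mono x \<alpha> = (\<Prod>i\<in>UNIV. x i ^ \<alpha> i)"

definition supp :: "(('d::finite \<Rightarrow> nat) \<Rightarrow> real) \<Rightarrow> ('d \<Rightarrow> nat) set" where
  "supp p = {\<alpha>. p \<alpha> \<noteq> 0}"

definition is_poly :: "(('d::finite \<Rightarrow> nat) \<Rightarrow> real) \<Rightarrow> bool" where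
  "is_poly p \<longleftrightarrow> finite (supp p)"

definition poly_eval :: "(('d::finite \<Rightarrow> nat) \<Rightarrow> real) \<Rightarrow> ('d \<Rightarrow> real) \<Rightarrow> real" where
  "poly_eval p x = (\<Sum>\<alpha>\<in>supp p. p \<alpha> * mono x \<alpha>)"

definition vanishing_ideal :: "('d::finite \<Rightarrow> real) set \<Rightarrow> (('d \<Rightarrow> nat) \<Rightarrow> real) set" where
  "vanishing_ideal D = {p. is_poly p \<and> (\<forall>x\<in>D. poly_eval p x = 0)}"

definition term_order :: "(('d::finite \<Rightarrow> nat) \<Rightarrow> ('d \<Rightarrow> nat) \<Rightarrow> bool) \<Rightarrow> bool" where
  "term_order le \<longleftrightarrow>
     (\<forall>\<alpha>. le \<alpha> \<alpha>) \<and>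
     (\<forall>\<alpha> \<beta>. le \<alpha> \<beta> \<and> le \<beta> \<alpha> \<longrightarrow> \<alpha> = \<beta>) \<and>
     (\<forall>\<alpha> \<beta> \<gamma>. le \<alpha> \<beta> \<and> le \<beta> \<gamma> \<longrightarrow> le \<alpha> \<gamma>) \<and>
     (\<forall>\<alpha> \<beta>. le \<alpha> \<beta> \<or> le \<beta> \<alpha>) \<and>
     (\<forall>\<alpha>. le (\<lambda>_. 0) \<alpha>) \<and>
     (\<forall>\<alpha> \<beta> \<gamma>. le \<alpha> \<beta> \<longrightarrow> le (\<lambda>i. \<alpha> i + \<gamma> i) (\<lambda>i. \<beta> i + \<gamma> i))"

definition is_leading_exp ::
  "(('d::finite \<Rightarrow> nat) \<Rightarrow> ('d \<Rightarrow> nat) \<Rightarrow> bool) \<Rightarrow> (('d \<Rightarrow> nat) \<Rightarrow> real) \<Rightarrow> ('d \<Rightarrow> nat) \<Rightarrow> bool" where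
  "is_leading_exp le p \<beta> \<longleftrightarrow> p \<beta> \<noteq> 0 \<and> (\<forall>\<gamma>. p \<gamma> \<noteq> 0 \<longrightarrow> le \<gamma> \<beta>)"

text \<open>L(D,>): exponents of monomials not divisible by any leading term of a
  (nonzero) element of I(D). Divisibility x^beta | x^alpha is beta \<le> alpha componentwise.\<close>
definition std_exps ::
  "('d::finite \<Rightarrow> real) set \<Rightarrow> (('d \<Rightarrow> nat) \<Rightarrow> ('d \<Rightarrow> nat) \<Rightarrow> bool) \<Rightarrow> ('d \<Rightarrow> nat) set" where
  "std_exps D le = {\<alpha>. \<not> (\<exists>p\<in>vanishing_ideal D. \<exists>\<beta>. is_leading_exp le p \<beta> \<and> \<beta> \<le> \<alpha>)}"

definition alg_fan :: "('d::finite \<Rightarrow> real) set \<Rightarrow> ('d \<Rightarrow> nat) set set" where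
  "alg_fan D = {std_exps D le | le. term_order le}"

definition aberration :: "nat \<Rightarrow> ('d::finite \<Rightarrow> real) \<Rightarrow> ('d \<Rightarrow> nat) set \<Rightarrow> real" where
  "aberration n w L = (1 / real n) * (\<Sum>\<alpha>\<in>L. \<Sum>i\<in>UNIV. w i * real (\<alpha> i))"

definition staircase :: "('d::finite \<Rightarrow> nat) set \<Rightarrow> bool" where
  "staircase L \<longleftrightarrow> (\<forall>\<alpha>\<in>L. \<forall>\<beta>. \<beta> \<le> \<alpha> \<longrightarrow> \<beta> \<in> L)"

text \<open>L is identifiable by D: |L| = |D| and the square matrix [x^alpha]_{x in D, alpha in L}
  is invertible, i.e. (being square) its columns are linearly independent.\<close>
definition identifiable :: "('d::finite \<Rightarrow> real) set \<Rightarrow> ('d \<Rightarrow> nat) set \<Rightarrow> bool" where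
  "identifiable D L \<longleftrightarrow> finite D \<and> finite L \<and> card L = card D \<and>
     (\<forall>c :: ('d \<Rightarrow> nat) \<Rightarrow> real.
        (\<forall>x\<in>D. (\<Sum>\<alpha>\<in>L. c \<alpha> * mono x \<alpha>) = 0) \<longrightarrow> (\<forall>\<alpha>\<in>L. c \<alpha> = 0))"

definition corner_cut :: "nat \<Rightarrow> ('d::finite \<Rightarrow> nat) set \<Rightarrow> bool" where
  "corner_cut n L \<longleftrightarrow> staircase L \<and> finite L \<and> card L = n \<and>
     (\<exists>(c :: 'd \<Rightarrow> real) (b :: real).
        ((\<forall>\<alpha>\<in>L. (\<Sum>i\<in>UNIV. c i * real (\<alpha> i)) < b) \<and>
         (\<forall>\<alpha>. \<alpha> \<notin> L \<longrightarrow> (\<Sum>i\<in>UNIV. c i * real (\<alpha> i)) > b)) \<or>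
        ((\<forall>\<alpha>\<in>L. (\<Sum>i\<in>UNIV. c i * real (\<alpha> i)) > b) \<and>
         (\<forall>\<alpha>. \<alpha> \<notin> L \<longrightarrow> (\<Sum>i\<in>UNIV. c i * real (\<alpha> i)) < b)))"

definition generic :: "('d::finite \<Rightarrow> real) set \<Rightarrow> bool" where
  "generic D \<longleftrightarrow> (\<forall>L. corner_cut (card D) L \<longrightarrow> identifiable D L)"

end

theory Submission
  imports Defs "HOL-Library.Function_Algebras" "HOL-Computational_Algebra.Polynomial" "HOL-Computational_Algebra.Primes"
begin


lemma to_refl: "term_order le \<Longrightarrow> le a a" unfolding term_order_def by blast
lemma to_antisym: "term_order le \<Longrightarrow> le a b \<Longrightarrow> le b a \<Longrightarrow> a = b" unfolding term_order_def by blast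
lemma to_trans: "term_order le \<Longrightarrow> le a b \<Longrightarrow> le b c \<Longrightarrow> le a c" unfolding term_order_def by blast
lemma to_total: "term_order le \<Longrightarrow> le a b \<or> le b a" unfolding term_order_def by blast
lemma to_zero: "term_order le \<Longrightarrow> le (\<lambda>_. 0) a" unfolding term_order_def by blast
lemma to_add: "term_order le \<Longrightarrow> le a b \<Longrightarrow> le (\<lambda>i. a i + c i) (\<lambda>i. b i + c i)"
  unfolding term_order_def by blast

lemma to_mono:
  assumes "term_order le" "(a::'d::finite \<Rightarrow> nat) \<le> b"
  shows "le a b"
proof -
  have "le (\<lambda>i. 0 + a i) (\<lambda>i. (b i - a i) + a i)"
    using to_add[of le "\<lambda>_. 0" "\<lambda>i. b i - a i" a] assms(1) to_zero[OF assms(1)] by simp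
  moreover have "(\<lambda>i. (b i - a i) + a i) = b" using assms(2) by (auto simp: le_fun_def)
  ultimately show ?thesis by simp
qed

lemma nat_seq_mono_sub:
  fixes s :: "nat \<Rightarrow> nat"
  shows "\<exists>r::nat\<Rightarrow>nat. strict_mono r \<and> (\<forall>k l. k \<le> l \<longrightarrow> s (r k) \<le> s (r l))"
proof -
  obtain r where r: "strict_mono r" "monoseq (\<lambda>n. s (r n))" using seq_monosub by blast
  show ?thesis
  proof (cases "\<forall>m n. m \<le> n \<longrightarrow> s (r m) \<le> s (r n)")
    case True show ?thesis by (rule exI[of _ r], rule conjI[OF r(1) True])
  next
    case False
    then have dec: "\<forall>m n. m \<le> n \<longrightarrow> s (r n) \<le> s (r m)" using r(2) unfolding monoseq_def by blast
    define v where "v = (LEAST v. v \<in> range (\<lambda>n. s (r n)))"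
    have "v \<in> range (\<lambda>n. s (r n))" unfolding v_def by (rule LeastI[of _ "s (r 0)"]) simp
    then obtain k0 where k0: "s (r k0) = v" by auto
    have vmin: "\<And>n. v \<le> s (r n)" unfolding v_def by (rule Least_le) simp
    have const: "s (r (k0 + n)) = v" for n
    proof -
      have "s (r (k0 + n)) \<le> s (r k0)" using dec by simp
      then show ?thesis using k0 vmin[of "k0+n"] by simp
    qed
    have "strict_mono (\<lambda>n. r (k0 + n))" using r(1) by (simp add: strict_mono_def)
    then show ?thesis using const by (intro exI[of _ "\<lambda>n. r (k0 + n)"]) simp
  qed
qed

lemma dickson_aux:
  fixes f :: "nat \<Rightarrow> ('d \<Rightarrow> nat)"
  assumes "finite S"
  shows "\<exists>g::nat\<Rightarrow>nat. strict_mono g \<and> (\<forall>i\<in>S. \<forall>k l. k \<le> l \<longrightarrow> f (g k) i \<le> f (g l) i)"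
  using assms
proof (induction S rule: finite_induct)
  case empty
  then show ?case by (intro exI[of _ "\<lambda>n::nat. n"]) (auto simp: strict_mono_def)
next
  case (insert a S)
  obtain g :: "nat \<Rightarrow> nat" where g: "strict_mono g" "\<forall>i\<in>S. \<forall>k l. k \<le> l \<longrightarrow> f (g k) i \<le> f (g l) i"
    using insert.IH by (elim exE conjE)
  obtain r :: "nat \<Rightarrow> nat" where r: "strict_mono r" "\<forall>k l. k \<le> l \<longrightarrow> f (g (r k)) a \<le> f (g (r l)) a"
    using nat_seq_mono_sub[of "\<lambda>n. f (g n) a"] by (elim exE conjE)
  have "strict_mono (g \<circ> r)" using g(1) r(1) by (simp add: strict_mono_def)
  moreover have "\<forall>i\<in>insert a S. \<forall>k l. k \<le> l \<longrightarrow> f ((g \<circ> r) k) i \<le> f ((g \<circ> r) l) i"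
  proof (intro ballI allI impI)
    fix i k l assume i: "i \<in> insert a S" and kl: "(k::nat) \<le> l"
    have rkl: "r k \<le> r l" using kl r(1) by (simp add: strict_mono_less_eq)
    show "f ((g \<circ> r) k) i \<le> f ((g \<circ> r) l) i"
    proof (cases "i = a")
      case True then show ?thesis using r(2) kl by simp
    next
      case False then show ?thesis using g(2) i rkl by simp
    qed
  qed
  ultimately show ?case by (intro exI[of _ "g \<circ> r"] conjI)
qed

lemma dickson:
  fixes f :: "nat \<Rightarrow> ('d::finite \<Rightarrow> nat)"
  shows "\<exists>i j. i < j \<and> f i \<le> f j"
proof -
  obtain g :: "nat \<Rightarrow> nat" where g: "strict_mono g" "\<forall>i\<in>UNIV. \<forall>k l. k \<le> l \<longrightarrow> f (g k) i \<le> f (g l) i"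
    using dickson_aux[of UNIV f] by auto
  have "g 0 < g 1" using g(1) by (simp add: strict_mono_def)
  moreover have "f (g 0) \<le> f (g 1)" using g(2) by (simp add: le_fun_def)
  ultimately show ?thesis by blast
qed

definition strict_rel :: "(('d \<Rightarrow> nat) \<Rightarrow> ('d \<Rightarrow> nat) \<Rightarrow> bool) \<Rightarrow> (('d \<Rightarrow> nat) \<times> ('d \<Rightarrow> nat)) set" where
  "strict_rel le = {(a, b). le a b \<and> a \<noteq> b}"

lemma to_wf:
  fixes le :: "('d::finite \<Rightarrow> nat) \<Rightarrow> ('d \<Rightarrow> nat) \<Rightarrow> bool"
  assumes to: "term_order le"
  shows "wf (strict_rel le)"
proof (rule ccontr)
  assume "\<not> wf (strict_rel le)"
  then obtain f where f: "\<forall>i. (f (Suc i), f i) \<in> strict_rel le"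
    unfolding wf_iff_no_infinite_down_chain by blast
  have chain: "le (f j) (f i) \<and> f j \<noteq> f i" if "i < j" for i j
    using that
  proof (induction j)
    case 0 then show ?case by simp
  next
    case (Suc j)
    have s: "le (f (Suc j)) (f j)" "f (Suc j) \<noteq> f j" using f by (auto simp: strict_rel_def)
    show ?case
    proof (cases "i = j")
      case True then show ?thesis using s by simp
    next
      case False
      then have ih: "le (f j) (f i)" "f j \<noteq> f i" using Suc by auto
      have "le (f (Suc j)) (f i)" using to_trans[OF to s(1) ih(1)] .
      moreover have "f (Suc j) \<noteq> f i"
      proof
        assume "f (Suc j) = f i"
        then have "le (f i) (f j)" using s by simp
        then show False using ih to_antisym[OF to] by blast
      qed
      ultimately show ?thesis by blast
    qed
  qed
  obtain i j where ij: "i < j" "f i \<le> f j" using dickson[of f] by blast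
  have "le (f i) (f j)" using to_mono[OF to ij(2)] .
  then show False using chain[OF ij(1)] to_antisym[OF to] by blast
qed


definition ei :: "nat \<Rightarrow> 'd \<Rightarrow> ('d \<Rightarrow> nat)" where
  "ei k i = (\<lambda>j. if j = i then k else 0)"

lemma mono_ei: "mono x (ei k i) = x i ^ k"
proof -
  have "mono x (ei k i) = (\<Prod>j\<in>UNIV. if j = i then x i ^ k else 1)"
    unfolding mono_def ei_def by (intro prod.cong) auto
  then show ?thesis by simp
qed

lemma inj_ei: "inj (\<lambda>k. ei k i)"
  by (rule injI) (auto simp: ei_def fun_eq_iff split: if_splits)

lemma std_exps_box:
  fixes D :: "('d::finite \<Rightarrow> real) set"
  assumes D: "finite D" and to: "term_order le" and a: "\<alpha> \<in> std_exps D le"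
  shows "\<alpha> i < card D"
proof (rule ccontr)
  assume "\<not> \<alpha> i < card D"
  then have ai: "card D \<le> \<alpha> i" by simp
  define n where "n = card D"
  define Q :: "real poly" where "Q = (\<Prod>x\<in>D. [:- x i, 1:])"
  have degQ: "degree Q = n" unfolding Q_def n_def
    by (subst degree_prod_eq_sum_degree) auto
  have lcQ: "coeff Q n = 1" using degQ lead_coeff_prod[of "\<lambda>x. [:- x i, 1:]" D]
    unfolding Q_def by simp
  define p :: "('d \<Rightarrow> nat) \<Rightarrow> real" where
    "p = (\<lambda>\<beta>. if (\<forall>j. j \<noteq> i \<longrightarrow> \<beta> j = 0) then coeff Q (\<beta> i) else 0)"
  have pei: "p (ei k i) = coeff Q k" for k unfolding p_def ei_def by simp
  have supp_sub: "supp p \<subseteq> (\<lambda>k. ei k i) ` {..n}"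
  proof
    fix \<beta> assume "\<beta> \<in> supp p"
    then have b: "\<forall>j. j \<noteq> i \<longrightarrow> \<beta> j = 0" "coeff Q (\<beta> i) \<noteq> 0"
      unfolding supp_def p_def by (auto split: if_splits)
    then have "\<beta> i \<le> n" using coeff_eq_0[of Q "\<beta> i"] degQ by fastforce
    moreover have "\<beta> = ei (\<beta> i) i" using b(1) unfolding ei_def by auto
    ultimately show "\<beta> \<in> (\<lambda>k. ei k i) ` {..n}" by blast
  qed
  have fin: "finite (supp p)" using supp_sub finite_subset by blast
  have eval: "poly_eval p x = poly Q (x i)" for x
  proof -
    have "poly_eval p x = (\<Sum>\<beta>\<in>(\<lambda>k. ei k i) ` {..n}. p \<beta> * mono x \<beta>)"
      unfolding poly_eval_def
      by (rule sum.mono_neutral_left) (use supp_sub in \<open>auto simp: supp_def\<close>)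
    also have "\<dots> = (\<Sum>k\<le>n. p (ei k i) * mono x (ei k i))"
      by (subst sum.reindex) (use inj_ei[of i] in \<open>auto intro: inj_on_subset\<close>)
    also have "\<dots> = (\<Sum>k\<le>n. coeff Q k * x i ^ k)" by (simp add: pei mono_ei)
    also have "\<dots> = poly Q (x i)" by (simp add: poly_altdef degQ)
    finally show ?thesis .
  qed
  have van: "p \<in> vanishing_ideal D"
    unfolding vanishing_ideal_def is_poly_def
  proof (intro CollectI conjI fin ballI)
    fix x assume "x \<in> D"
    then show "poly_eval p x = 0" unfolding eval Q_def poly_prod
      using D by (subst prod_zero_iff) auto
  qed
  have lead: "is_leading_exp le p (ei n i)"
    unfolding is_leading_exp_def
  proof (intro conjI allI impI)
    show "p (ei n i) \<noteq> 0" using pei lcQ by simp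
    fix \<gamma> assume "p \<gamma> \<noteq> 0"
    then have "\<gamma> \<in> supp p" by (simp add: supp_def)
    then obtain k where k: "k \<le> n" "\<gamma> = ei k i" using supp_sub by auto
    then have "\<gamma> \<le> ei n i" by (auto simp: ei_def le_fun_def)
    then show "le \<gamma> (ei n i)" using to_mono[OF to] by blast
  qed
  have "ei n i \<le> \<alpha>" using ai unfolding n_def by (auto simp: ei_def le_fun_def)
  then show False using a van lead unfolding std_exps_def by blast
qed

lemma finite_box: "finite {\<alpha> :: 'd::finite \<Rightarrow> nat. \<forall>i. \<alpha> i < N}"
proof -
  have "finite {f :: 'd \<Rightarrow> nat. \<forall>x. (x \<in> UNIV \<longrightarrow> f x \<in> {..<N}) \<and> (x \<notin> UNIV \<longrightarrow> f x = 0)}"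
    by (rule finite_set_of_finite_funs) auto
  then show ?thesis by simp
qed

lemma std_exps_finite:
  fixes D :: "('d::finite \<Rightarrow> real) set"
  assumes D: "finite D" and to: "term_order le"
  shows "finite (std_exps D le)"
  by (rule finite_subset[OF _ finite_box[of "card D"]]) (use std_exps_box[OF D to] in auto)


definition Rep :: "('d::finite \<Rightarrow> real) set \<Rightarrow> ('d \<Rightarrow> nat) set \<Rightarrow> (('d \<Rightarrow> real) \<Rightarrow> real) \<Rightarrow> bool" where
  "Rep D L f \<longleftrightarrow> (\<exists>c. \<forall>x\<in>D. f x = (\<Sum>\<beta>\<in>L. c \<beta> * mono x \<beta>))"

lemma mono_add: "mono x (\<lambda>i. a i + b i) = mono x a * mono x b"
  unfolding mono_def by (simp add: power_add prod.distrib)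

lemma Rep_zero: "Rep D L (\<lambda>x. 0)"
  unfolding Rep_def by (intro exI[of _ "\<lambda>_. 0"]) simp

lemma Rep_add: "Rep D L f \<Longrightarrow> Rep D L g \<Longrightarrow> Rep D L (\<lambda>x. f x + g x)"
  unfolding Rep_def
proof -
  assume "\<exists>c. \<forall>x\<in>D. f x = (\<Sum>\<beta>\<in>L. c \<beta> * mono x \<beta>)" "\<exists>c. \<forall>x\<in>D. g x = (\<Sum>\<beta>\<in>L. c \<beta> * mono x \<beta>)"
  then obtain c d where c: "\<forall>x\<in>D. f x = (\<Sum>\<beta>\<in>L. c \<beta> * mono x \<beta>)"
    and d: "\<forall>x\<in>D. g x = (\<Sum>\<beta>\<in>L. d \<beta> * mono x \<beta>)" by (elim exE)
  show "\<exists>c. \<forall>x\<in>D. f x + g x = (\<Sum>\<beta>\<in>L. c \<beta> * mono x \<beta>)"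
    by (rule exI[of _ "\<lambda>\<beta>. c \<beta> + d \<beta>"]) (simp add: c d distrib_right sum.distrib)
qed

lemma Rep_scale: "Rep D L f \<Longrightarrow> Rep D L (\<lambda>x. a * f x)"
  unfolding Rep_def
proof -
  assume "\<exists>c. \<forall>x\<in>D. f x = (\<Sum>\<beta>\<in>L. c \<beta> * mono x \<beta>)"
  then obtain c where c: "\<forall>x\<in>D. f x = (\<Sum>\<beta>\<in>L. c \<beta> * mono x \<beta>)" by (elim exE)
  show "\<exists>c. \<forall>x\<in>D. a * f x = (\<Sum>\<beta>\<in>L. c \<beta> * mono x \<beta>)"
    by (rule exI[of _ "\<lambda>\<beta>. a * c \<beta>"]) (simp add: c sum_distrib_left mult.assoc)
qed

lemma Rep_sum: "finite A \<Longrightarrow> (\<And>a. a \<in> A \<Longrightarrow> Rep D L (g a)) \<Longrightarrow> Rep D L (\<lambda>x. \<Sum>a\<in>A. g a x)"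
proof (induction A rule: finite_induct)
  case empty then show ?case by (simp add: Rep_zero)
next
  case (insert a A)
  then show ?case using Rep_add[of D L "g a" "\<lambda>x. \<Sum>a\<in>A. g a x"] by simp
qed

lemma Rep_cong: "Rep D L f \<Longrightarrow> (\<And>x. x \<in> D \<Longrightarrow> f x = g x) \<Longrightarrow> Rep D L g"
  unfolding Rep_def by auto

lemma reduce:
  fixes D :: "('d::finite \<Rightarrow> real) set"
  assumes D: "finite D" and to: "term_order le"
  shows "Rep D (std_exps D le) (\<lambda>x. mono x \<alpha>)"
proof -
  define L where "L = std_exps D le"
  have finL: "finite L" unfolding L_def using std_exps_finite[OF D to] .
  have "Rep D L (\<lambda>x. mono x \<alpha>)"
  proof (induction \<alpha> rule: wf_induct_rule[OF to_wf[OF to]])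
    case (1 \<alpha>)
    show ?case
    proof (cases "\<alpha> \<in> L")
      case True
      show ?thesis unfolding Rep_def
      proof (rule exI[of _ "\<lambda>\<beta>. if \<beta> = \<alpha> then 1 else 0"], intro ballI)
        fix x
        have "(\<Sum>\<beta>\<in>L. (if \<beta> = \<alpha> then 1 else 0) * mono x \<beta>) = (\<Sum>\<beta>\<in>L. if \<beta> = \<alpha> then mono x \<beta> else 0)"
          by (rule sum.cong) auto
        then show "mono x \<alpha> = (\<Sum>\<beta>\<in>L. (if \<beta> = \<alpha> then 1 else 0) * mono x \<beta>)"
          using finL True by simp
      qed
    next
      case False
      then obtain p \<beta> where p: "p \<in> vanishing_ideal D" and lead: "is_leading_exp le p \<beta>"
        and ba: "\<beta> \<le> \<alpha>" unfolding L_def std_exps_def by blast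
      define \<delta> where "\<delta> = (\<lambda>i. \<alpha> i - \<beta> i)"
      define sh where "sh = (\<lambda>\<gamma> i. \<gamma> i + \<delta> i)"
      have shb: "sh \<beta> = \<alpha>" using ba unfolding sh_def \<delta>_def by (auto simp: le_fun_def fun_eq_iff)
      have pb: "p \<beta> \<noteq> 0" using lead unfolding is_leading_exp_def by blast
      have finS: "finite (supp p)" using p unfolding vanishing_ideal_def is_poly_def by blast
      have bS: "\<beta> \<in> supp p" using pb by (simp add: supp_def)
      define G where "G = supp p - {\<beta>}"
      have less: "(sh \<gamma>, \<alpha>) \<in> strict_rel le" if "\<gamma> \<in> G" for \<gamma>
      proof -
        have g: "p \<gamma> \<noteq> 0" "\<gamma> \<noteq> \<beta>" using that unfolding G_def supp_def by auto
        have "le \<gamma> \<beta>" using lead g(1) unfolding is_leading_exp_def by blast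
        then have "le (sh \<gamma>) (sh \<beta>)" unfolding sh_def by (rule to_add[OF to])
        moreover have "sh \<gamma> \<noteq> sh \<beta>" using g(2) unfolding sh_def by (auto simp: fun_eq_iff)
        ultimately show ?thesis using shb by (simp add: strict_rel_def)
      qed
      have "\<forall>\<gamma>\<in>G. \<exists>c. \<forall>x\<in>D. mono x (sh \<gamma>) = (\<Sum>\<eta>\<in>L. c \<eta> * mono x \<eta>)"
        using 1 less unfolding Rep_def by blast
      then obtain C where C: "\<forall>\<gamma>\<in>G. \<forall>x\<in>D. mono x (sh \<gamma>) = (\<Sum>\<eta>\<in>L. C \<gamma> \<eta> * mono x \<eta>)"
        by (metis bchoice)
      show ?thesis unfolding Rep_def
      proof (rule exI[of _ "\<lambda>\<eta>. - (1 / p \<beta>) * (\<Sum>\<gamma>\<in>G. p \<gamma> * C \<gamma> \<eta>)"], intro ballI)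
        fix x assume x: "x \<in> D"
        have "0 = poly_eval p x * mono x \<delta>" using p x unfolding vanishing_ideal_def by simp
        also have "\<dots> = (\<Sum>\<gamma>\<in>supp p. p \<gamma> * mono x (sh \<gamma>))"
          unfolding poly_eval_def sum_distrib_right sh_def mono_add by (simp add: mult.assoc)
        also have "\<dots> = p \<beta> * mono x \<alpha> + (\<Sum>\<gamma>\<in>G. p \<gamma> * mono x (sh \<gamma>))"
          unfolding G_def using finS bS shb by (simp add: sum.remove)
        finally have eq: "p \<beta> * mono x \<alpha> = - (\<Sum>\<gamma>\<in>G. p \<gamma> * mono x (sh \<gamma>))" by simp
        have "(\<Sum>\<eta>\<in>L. (- (1 / p \<beta>) * (\<Sum>\<gamma>\<in>G. p \<gamma> * C \<gamma> \<eta>)) * mono x \<eta>)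
            = - (1 / p \<beta>) * (\<Sum>\<gamma>\<in>G. p \<gamma> * (\<Sum>\<eta>\<in>L. C \<gamma> \<eta> * mono x \<eta>))"
          by (simp add: sum_distrib_left sum_distrib_right sum.swap[of _ L G] mult.assoc)
        also have "\<dots> = - (1 / p \<beta>) * (\<Sum>\<gamma>\<in>G. p \<gamma> * mono x (sh \<gamma>))"
          using C x by simp
        also have "\<dots> = mono x \<alpha>" using eq pb by (simp add: field_simps)
        finally show "mono x \<alpha> = (\<Sum>\<eta>\<in>L. (- (1 / p \<beta>) * (\<Sum>\<gamma>\<in>G. p \<gamma> * C \<gamma> \<eta>)) * mono x \<eta>)" by simp
      qed
    qed
  qed
  then show ?thesis unfolding L_def .
qed

lemma Rep_times_coord:
  assumes allm: "\<And>\<alpha>. Rep D L (\<lambda>x. mono x \<alpha>)" and f: "Rep D L f" and finL: "finite L"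
  shows "Rep D L (\<lambda>x. x i * f x)"
proof -
  obtain c where c: "\<forall>x\<in>D. f x = (\<Sum>\<beta>\<in>L. c \<beta> * mono x \<beta>)" using f unfolding Rep_def by blast
  have "Rep D L (\<lambda>x. \<Sum>\<beta>\<in>L. c \<beta> * mono x (\<lambda>j. \<beta> j + ei 1 i j))"
    using finL by (intro Rep_sum Rep_scale allm)
  then show ?thesis
  proof (rule Rep_cong)
    fix x assume "x \<in> D"
    then show "(\<Sum>\<beta>\<in>L. c \<beta> * mono x (\<lambda>j. \<beta> j + ei 1 i j)) = x i * f x"
      using c by (simp add: mono_add mono_ei sum_distrib_left mult_ac)
  qed
qed


lemma mono_zero: "mono x (\<lambda>_. 0) = 1" unfolding mono_def by simp

lemma Rep_prod_affine:
  assumes allm: "\<And>\<alpha>. Rep D L (\<lambda>x. mono x \<alpha>)" and finL: "finite L" and Z: "finite Z"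
  shows "Rep D L (\<lambda>y. \<Prod>z\<in>Z. (y (ix z) - a z) * b z)"
  using Z
proof (induction Z rule: finite_induct)
  case empty
  then show ?case using allm[of "\<lambda>_. 0"] by (simp add: mono_zero)
next
  case (insert z Z)
  define g where "g = (\<lambda>y. \<Prod>z\<in>Z. (y (ix z) - a z) * b z)"
  have "Rep D L (\<lambda>y. b z * (y (ix z) * g y) + (- a z * b z) * g y)"
    using insert.IH unfolding g_def
    by (intro Rep_add Rep_scale Rep_times_coord[OF allm] finL) auto
  then show ?case
    by (rule Rep_cong) (use insert.hyps in \<open>simp add: g_def algebra_simps\<close>)
qed

lemma Rep_delta:
  fixes D :: "('d::finite \<Rightarrow> real) set"
  assumes allm: "\<And>\<alpha>. Rep D L (\<lambda>x. mono x \<alpha>)" and finL: "finite L" and D: "finite D" and x: "x \<in> D"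
  shows "Rep D L (\<lambda>y. if y = x then 1 else 0)"
proof -
  have "\<forall>z. \<exists>i. z \<noteq> x \<longrightarrow> z i \<noteq> x i" by (metis ext)
  then obtain ix where ix: "\<And>z. z \<noteq> x \<Longrightarrow> z (ix z) \<noteq> x (ix z)" by metis
  define Z where "Z = D - {x}"
  have finZ: "finite Z" using D unfolding Z_def by simp
  have R: "Rep D L (\<lambda>y. \<Prod>z\<in>Z. (y (ix z) - z (ix z)) * (1 / (x (ix z) - z (ix z))))"
    by (rule Rep_prod_affine[OF allm finL finZ])
  show ?thesis
  proof (rule Rep_cong[OF R])
    fix y assume y: "y \<in> D"
    show "(\<Prod>z\<in>Z. (y (ix z) - z (ix z)) * (1 / (x (ix z) - z (ix z)))) = (if y = x then 1 else 0)"
    proof (cases "y = x")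
      case True
      have "(\<Prod>z\<in>Z. (y (ix z) - z (ix z)) * (1 / (x (ix z) - z (ix z)))) = (\<Prod>z\<in>Z. 1)"
        using ix True unfolding Z_def by (intro prod.cong) (auto simp: eq_commute[of "x _"])
      then show ?thesis using True by simp
    next
      case False
      then have "y \<in> Z" using y unfolding Z_def by simp
      have "(\<Prod>z\<in>Z. (y (ix z) - z (ix z)) * (1 / (x (ix z) - z (ix z)))) = 0"
        using \<open>y \<in> Z\<close> finZ by (subst prod_zero_iff) auto
      then show ?thesis using False by simp
    qed
  qed
qed

lemma Rep_all:
  fixes D :: "('d::finite \<Rightarrow> real) set"
  assumes allm: "\<And>\<alpha>. Rep D L (\<lambda>x. mono x \<alpha>)" and finL: "finite L" and D: "finite D"
  shows "Rep D L f"
proof -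
  have "Rep D L (\<lambda>y. \<Sum>x\<in>D. f x * (if y = x then 1 else 0))"
    using D by (intro Rep_sum Rep_scale Rep_delta[OF allm finL D])
  then show ?thesis
  proof (rule Rep_cong)
    fix y assume "y \<in> D"
    have "(\<Sum>x\<in>D. f x * (if y = x then 1 else 0)) = (\<Sum>x\<in>D. if y = x then f x else 0)"
      by (rule sum.cong) auto
    then show "(\<Sum>x\<in>D. f x * (if y = x then 1 else 0)) = f y" using D \<open>y \<in> D\<close> by simp
  qed
qed


definition sc :: "real \<Rightarrow> ('a \<Rightarrow> real) \<Rightarrow> ('a \<Rightarrow> real)" where
  "sc c f = (\<lambda>x. c * f x)"

interpretation fv: vector_space sc
  by unfold_locales (auto simp: sc_def fun_eq_iff algebra_simps)

lemma sum_apply_fun: "(\<Sum>v\<in>A. g v) y = (\<Sum>v\<in>A. g v y)"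
  by (induction A rule: infinite_finite_induct) auto

lemma sum_ind: "finite L \<Longrightarrow> b \<in> L \<Longrightarrow> (\<Sum>\<beta>\<in>L. (if \<beta> = b then 1 else 0) * g \<beta>) = (g b :: real)"
proof -
  assume "finite L" "b \<in> L"
  have "(\<Sum>\<beta>\<in>L. (if \<beta> = b then 1 else 0) * g \<beta>) = (\<Sum>\<beta>\<in>L. if \<beta> = b then g \<beta> else 0)"
    by (rule sum.cong) auto
  then show ?thesis using \<open>finite L\<close> \<open>b \<in> L\<close> by simp
qed

definition dlt :: "'a \<Rightarrow> 'a \<Rightarrow> real" where "dlt x = (\<lambda>y. if y = x then 1 else 0)"
definition evr :: "('d::finite \<Rightarrow> real) set \<Rightarrow> ('d \<Rightarrow> nat) \<Rightarrow> ('d \<Rightarrow> real) \<Rightarrow> real" where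
  "evr D \<beta> = (\<lambda>y. if y \<in> D then mono y \<beta> else 0)"

lemma inj_dlt: "inj dlt"
  by (rule injI) (simp add: dlt_def fun_eq_iff, metis zero_neq_one)

lemma dlt_independent:
  assumes D: "finite D"
  shows "fv.independent (dlt ` D)"
proof -
  have fin: "finite (dlt ` D)" using D by simp
  show ?thesis unfolding fv.dependent_finite[OF fin]
  proof (intro notI, elim exE conjE bexE)
    fix u v assume v: "v \<in> dlt ` D" and uv: "u v \<noteq> 0" and s: "(\<Sum>v\<in>dlt ` D. sc (u v) v) = 0"
    obtain x0 where x0: "x0 \<in> D" "v = dlt x0" using v by blast
    have "0 = (\<Sum>v\<in>dlt ` D. sc (u v) v) x0" using s by simp
    also have "\<dots> = (\<Sum>x\<in>D. u (dlt x) * dlt x x0)"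
      by (simp add: sum_apply_fun sc_def sum.reindex[OF inj_on_subset[OF inj_dlt]])
    also have "\<dots> = (\<Sum>x\<in>D. if x = x0 then u (dlt x0) else 0)"
      by (rule sum.cong) (auto simp: dlt_def)
    also have "\<dots> = u v" using D x0 by simp
    finally show False using uv by simp
  qed
qed

lemma card_le_of_Rep:
  fixes D :: "('d::finite \<Rightarrow> real) set"
  assumes D: "finite D" and L: "finite L" and R: "\<And>f. Rep D L f"
  shows "card D \<le> card L"
proof -
  have sub: "dlt ` D \<subseteq> fv.span (evr D ` L)"
  proof
    fix v assume "v \<in> dlt ` D"
    then obtain x where x: "x \<in> D" "v = dlt x" by blast
    obtain c where c: "\<forall>y\<in>D. dlt x y = (\<Sum>\<beta>\<in>L. c \<beta> * mono y \<beta>)"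
      using R[of "dlt x"] unfolding Rep_def by blast
    have "dlt x = (\<Sum>\<beta>\<in>L. sc (c \<beta>) (evr D \<beta>))"
    proof
      fix y show "dlt x y = (\<Sum>\<beta>\<in>L. sc (c \<beta>) (evr D \<beta>)) y"
        using c x by (cases "y \<in> D") (auto simp: sum_apply_fun sc_def evr_def dlt_def)
    qed
    also have "\<dots> \<in> fv.span (evr D ` L)"
      by (intro fv.span_sum fv.span_scale fv.span_base) auto
    finally show "v \<in> fv.span (evr D ` L)" using x by simp
  qed
  have "card (dlt ` D) \<le> card (evr D ` L)"
    using fv.independent_span_bound[OF _ dlt_independent[OF D] sub] L by simp
  also have "\<dots> \<le> card L" by (rule card_image_le[OF L])
  finally show ?thesis by (simp add: card_image[OF inj_on_subset[OF inj_dlt]])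
qed

lemma Rep_of_identifiable:
  fixes D :: "('d::finite \<Rightarrow> real) set"
  assumes idf: "identifiable D L"
  shows "Rep D L f"
proof -
  have D: "finite D" and L: "finite L" and cardL: "card L = card D"
    and lin: "\<And>c. (\<forall>x\<in>D. (\<Sum>\<alpha>\<in>L. c \<alpha> * mono x \<alpha>) = 0) \<Longrightarrow> (\<forall>\<alpha>\<in>L. c \<alpha> = 0)"
    using idf unfolding identifiable_def by blast+
  have inj: "inj_on (evr D) L"
  proof (rule inj_onI, rule ccontr)
    fix b1 b2 assume b: "b1 \<in> L" "b2 \<in> L" "evr D b1 = evr D b2" "b1 \<noteq> b2"
    define c where "c = (\<lambda>\<beta>. (if \<beta> = b1 then 1 else 0) - (if \<beta> = b2 then (1::real) else 0))"
    have "\<forall>x\<in>D. (\<Sum>\<alpha>\<in>L. c \<alpha> * mono x \<alpha>) = 0"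
    proof
      fix x assume x: "x \<in> D"
      have "(\<Sum>\<alpha>\<in>L. c \<alpha> * mono x \<alpha>) = (\<Sum>\<alpha>\<in>L. (if \<alpha> = b1 then 1 else 0) * mono x \<alpha>) - (\<Sum>\<alpha>\<in>L. (if \<alpha> = b2 then 1 else 0) * mono x \<alpha>)"
        unfolding c_def by (simp add: left_diff_distrib sum_subtractf)
      also have "\<dots> = mono x b1 - mono x b2" using sum_ind[OF L b(1)] sum_ind[OF L b(2)] by simp
      also have "\<dots> = 0" using fun_cong[OF b(3), of x] x by (simp add: evr_def)
      finally show "(\<Sum>\<alpha>\<in>L. c \<alpha> * mono x \<alpha>) = 0" .
    qed
    then have "c b1 = 0" using lin b(1) by blast
    then show False using b(4) by (simp add: c_def)
  qed
  have finE: "finite (evr D ` L)" using L by simp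
  have indE: "fv.independent (evr D ` L)"
    unfolding fv.dependent_finite[OF finE]
  proof (intro notI, elim exE conjE bexE)
    fix u v assume v: "v \<in> evr D ` L" and uv: "u v \<noteq> 0" and s: "(\<Sum>v\<in>evr D ` L. sc (u v) v) = 0"
    obtain b0 where b0: "b0 \<in> L" "v = evr D b0" using v by blast
    have "\<forall>x\<in>D. (\<Sum>\<alpha>\<in>L. u (evr D \<alpha>) * mono x \<alpha>) = 0"
    proof
      fix x assume x: "x \<in> D"
      have "0 = (\<Sum>v\<in>evr D ` L. sc (u v) v) x" using s by simp
      also have "\<dots> = (\<Sum>\<alpha>\<in>L. u (evr D \<alpha>) * evr D \<alpha> x)"
        by (simp add: sum_apply_fun sc_def sum.reindex[OF inj])
      also have "\<dots> = (\<Sum>\<alpha>\<in>L. u (evr D \<alpha>) * mono x \<alpha>)" using x by (simp add: evr_def)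
      finally show "(\<Sum>\<alpha>\<in>L. u (evr D \<alpha>) * mono x \<alpha>) = 0" by simp
    qed
    then have "u (evr D b0) = 0" using lin[of "\<lambda>\<alpha>. u (evr D \<alpha>)"] b0(1) by blast
    then show False using uv b0 by simp
  qed
  define V where "V = {g :: ('d \<Rightarrow> real) \<Rightarrow> real. \<forall>y. y \<notin> D \<longrightarrow> g y = 0}"
  have Vsub: "V \<subseteq> fv.span (dlt ` D)"
  proof
    fix g assume g: "g \<in> V"
    have "g = (\<Sum>x\<in>D. sc (g x) (dlt x))"
    proof
      fix y
      have "(\<Sum>x\<in>D. sc (g x) (dlt x)) y = (\<Sum>x\<in>D. if x = y then g y else 0)"
        unfolding sum_apply_fun sc_def dlt_def by (rule sum.cong) auto
      also have "\<dots> = g y" using D g unfolding V_def by auto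
      finally show "g y = (\<Sum>x\<in>D. sc (g x) (dlt x)) y" by simp
    qed
    also have "\<dots> \<in> fv.span (dlt ` D)"
      by (intro fv.span_sum fv.span_scale fv.span_base) auto
    finally show "g \<in> fv.span (dlt ` D)" .
  qed
  have cE: "card (evr D ` L) = card D" using cardL card_image[OF inj] by simp
  have EV: "evr D ` L \<subseteq> V" unfolding V_def evr_def by auto
  have VE: "V \<subseteq> fv.span (evr D ` L)"
  proof
    fix g assume gV: "g \<in> V"
    show "g \<in> fv.span (evr D ` L)"
    proof (rule ccontr)
      assume ng: "g \<notin> fv.span (evr D ` L)"
      have ind2: "fv.independent (insert g (evr D ` L))" by (rule fv.independent_insertI[OF ng indE])
      have sub2: "insert g (evr D ` L) \<subseteq> fv.span (dlt ` D)" using gV EV Vsub by blast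
      have "card (insert g (evr D ` L)) \<le> card (dlt ` D)"
        using fv.independent_span_bound[OF _ ind2 sub2] D by simp
      also have "\<dots> = card D" by (simp add: card_image[OF inj_on_subset[OF inj_dlt]])
      finally have "card (insert g (evr D ` L)) \<le> card D" .
      moreover have "g \<notin> evr D ` L" using ng fv.span_base by blast
      ultimately show False using cE finE by simp
    qed
  qed
  define g where "g = (\<lambda>y. if y \<in> D then f y else 0)"
  have "g \<in> V" unfolding V_def g_def by simp
  then have "g \<in> range (\<lambda>u. \<Sum>v\<in>evr D ` L. sc (u v) v)" using VE fv.span_finite[OF finE] by blast
  then obtain u where u: "g = (\<Sum>v\<in>evr D ` L. sc (u v) v)" by blast
  show ?thesis unfolding Rep_def
  proof (rule exI[of _ "\<lambda>\<alpha>. u (evr D \<alpha>)"], intro ballI)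
    fix x assume x: "x \<in> D"
    have "f x = g x" using x by (simp add: g_def)
    also have "\<dots> = (\<Sum>\<alpha>\<in>L. u (evr D \<alpha>) * evr D \<alpha> x)"
      unfolding u by (simp add: sum_apply_fun sc_def sum.reindex[OF inj])
    also have "\<dots> = (\<Sum>\<alpha>\<in>L. u (evr D \<alpha>) * mono x \<alpha>)" using x by (simp add: evr_def)
    finally show "f x = (\<Sum>\<alpha>\<in>L. u (evr D \<alpha>) * mono x \<alpha>)" .
  qed
qed


lemma exists_prime_inj: "\<exists>P :: 'd::finite \<Rightarrow> nat. inj P \<and> (\<forall>i. prime (P i))"
proof -
  obtain g :: "'d \<Rightarrow> nat" and m where g: "g ` UNIV = {i. i < m}" "inj_on g UNIV"
    using finite_imp_inj_to_nat_seg[of "UNIV :: 'd set"] by auto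
  have "infinite {p :: nat. prime p}" by (rule primes_infinite)
  then obtain f :: "nat \<Rightarrow> nat" where f: "inj f" "range f \<subseteq> {p. prime p}"
    using infinite_countable_subset[OF \<open>infinite {p :: nat. prime p}\<close>] by (elim exE conjE)
  have "inj (f \<circ> g)" using f(1) g(2) by (simp add: inj_compose)
  moreover have "\<forall>i. prime ((f \<circ> g) i)" using f(2) by auto
  ultimately show ?thesis by (intro exI[of _ "f \<circ> g"] conjI)
qed

definition E :: "('d::finite \<Rightarrow> nat) \<Rightarrow> ('d \<Rightarrow> nat) \<Rightarrow> nat" where
  "E P \<alpha> = (\<Prod>i\<in>UNIV. P i ^ \<alpha> i)"

lemma E_inj:
  fixes P :: "'d::finite \<Rightarrow> nat"
  assumes P: "inj P" "\<forall>i. prime (P i)" and eq: "E P a = E P b"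
  shows "a = b"
proof
  fix i
  have rw: "E P \<alpha> = (\<Prod>p\<in>P ` UNIV. p ^ \<alpha> (inv P p))" for \<alpha>
    unfolding E_def by (subst prod.reindex[OF P(1)]) (simp add: inv_f_f[OF P(1)])
  have mult: "multiplicity (P i) (E P \<alpha>) = \<alpha> i" for \<alpha>
    unfolding rw using P by (subst multiplicity_prod_prime_powers) (auto simp: inv_f_f[OF P(1)])
  show "a i = b i" using mult[of a] mult[of b] eq by simp
qed

lemma E_pos: "(\<forall>i. prime (P i)) \<Longrightarrow> E P \<alpha> \<ge> 1"
proof -
  assume P: "\<forall>i. prime (P i)"
  have "0 < E P \<alpha>" unfolding E_def using P by (intro prod_pos) (simp add: prime_gt_0_nat)
  then show ?thesis by simp
qed

lemma E_add: "E P (\<lambda>i. a i + b i) = E P a * E P b"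
  unfolding E_def by (simp add: power_add prod.distrib)

definition pt :: "('d::finite \<Rightarrow> nat) \<Rightarrow> nat \<Rightarrow> ('d \<Rightarrow> real)" where
  "pt P j = (\<lambda>i. real (P i) ^ j)"

lemma mono_pt: "mono (pt P j) \<alpha> = real (E P \<alpha>) ^ j"
  unfolding mono_def pt_def E_def
  by (simp add: prod_power_distrib power_mult[symmetric] mult.commute)

lemma pt_inj:
  assumes "\<forall>i. prime (P i)"
  shows "inj (pt P)"
proof (rule injI)
  fix j k assume "pt P j = pt P k"
  then have "pt P j undefined = pt P k undefined" by simp
  then have "real (P undefined) ^ j = real (P undefined) ^ k" unfolding pt_def .
  moreover have "real (P undefined) > 1" using assms prime_gt_1_nat by simp
  ultimately show "j = k" by simp
qed

lemma design_identifies: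
  fixes P :: "'d::finite \<Rightarrow> nat"
  assumes P: "inj P" "\<forall>i. prime (P i)" and L: "finite L" "card L = n"
  shows "identifiable (pt P ` {..<n}) L"
  unfolding identifiable_def
proof (intro conjI allI impI)
  show "finite (pt P ` {..<n})" by simp
  show "finite L" by (rule L(1))
  show "card L = card (pt P ` {..<n})"
    using L(2) card_image[OF inj_on_subset[OF pt_inj[OF P(2)]]] by simp
  fix c assume c: "\<forall>x\<in>pt P ` {..<n}. (\<Sum>\<alpha>\<in>L. c \<alpha> * mono x \<alpha>) = 0"
  define u where "u = (\<lambda>\<alpha>. real (E P \<alpha>))"
  have uinj: "u a = u b \<Longrightarrow> a = b" for a b using E_inj[OF P] unfolding u_def by simp
  have cj: "(\<Sum>\<alpha>\<in>L. c \<alpha> * u \<alpha> ^ j) = 0" if "j < n" for j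
    using c that unfolding u_def by (auto simp: mono_pt)
  show "\<forall>\<alpha>\<in>L. c \<alpha> = 0"
  proof
    fix b assume b: "b \<in> L"
    define Q :: "real poly" where "Q = (\<Prod>\<alpha>\<in>L - {b}. [:- u \<alpha>, 1:])"
    have degQ: "degree Q = n - 1" unfolding Q_def
      by (subst degree_prod_eq_sum_degree) (use L b in auto)
    have "(\<Sum>\<alpha>\<in>L. c \<alpha> * poly Q (u \<alpha>)) = (\<Sum>\<alpha>\<in>L. c \<alpha> * (\<Sum>j\<le>degree Q. coeff Q j * u \<alpha> ^ j))"
      by (simp add: poly_altdef)
    also have "\<dots> = (\<Sum>j\<le>degree Q. coeff Q j * (\<Sum>\<alpha>\<in>L. c \<alpha> * u \<alpha> ^ j))"
      by (simp add: sum_distrib_left sum.swap[of _ L] mult_ac)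
    also have "\<dots> = 0"
    proof (rule sum.neutral, intro ballI)
      fix j assume "j \<in> {..degree Q}"
      then have "j < n" using degQ L b by (cases n) auto
      then show "coeff Q j * (\<Sum>\<alpha>\<in>L. c \<alpha> * u \<alpha> ^ j) = 0" using cj by simp
    qed
    finally have s0: "(\<Sum>\<alpha>\<in>L. c \<alpha> * poly Q (u \<alpha>)) = 0" .
    have z: "poly Q (u \<alpha>) = 0" if "\<alpha> \<in> L - {b}" for \<alpha>
      unfolding Q_def poly_prod using that L by (subst prod_zero_iff) auto
    have nz: "poly Q (u b) \<noteq> 0"
      unfolding Q_def poly_prod using L uinj by (subst prod_zero_iff) auto
    have "(\<Sum>\<alpha>\<in>L. c \<alpha> * poly Q (u \<alpha>)) = c b * poly Q (u b) + (\<Sum>\<alpha>\<in>L - {b}. c \<alpha> * poly Q (u \<alpha>))"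
      using L b by (simp add: sum.remove)
    also have "(\<Sum>\<alpha>\<in>L - {b}. c \<alpha> * poly Q (u \<alpha>)) = 0" using z by simp
    finally show "c b = 0" using s0 nz by simp
  qed
qed


definition wt :: "('d::finite \<Rightarrow> real) \<Rightarrow> ('d \<Rightarrow> nat) \<Rightarrow> real" where
  "wt w \<alpha> = (\<Sum>i\<in>UNIV. w i * real (\<alpha> i))"

definition lew :: "('d::finite \<Rightarrow> real) \<Rightarrow> ('d \<Rightarrow> nat) \<Rightarrow> ('d \<Rightarrow> nat) \<Rightarrow> ('d \<Rightarrow> nat) \<Rightarrow> bool" where
  "lew w P a b \<longleftrightarrow> wt w a < wt w b \<or> (wt w a = wt w b \<and> E P a \<le> E P b)"

lemma wt_add: "wt w (\<lambda>i. a i + b i) = wt w a + wt w b"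
  unfolding wt_def by (simp add: distrib_left sum.distrib)

lemma wt_nonneg: "\<forall>i. w i > 0 \<Longrightarrow> wt w a \<ge> 0"
  unfolding wt_def by (intro sum_nonneg) (simp add: less_imp_le)

lemma lew_term_order:
  fixes w :: "'d::finite \<Rightarrow> real" and P :: "'d \<Rightarrow> nat"
  assumes w: "\<forall>i. w i > 0" and P: "inj P" "\<forall>i. prime (P i)"
  shows "term_order (lew w P)"
  unfolding term_order_def
proof (intro conjI allI impI)
  fix a b c :: "'d \<Rightarrow> nat"
  show "lew w P a a" by (simp add: lew_def)
  show "a = b" if ab: "lew w P a b \<and> lew w P b a"
  proof -
    have "wt w a = wt w b" using ab unfolding lew_def by linarith
    moreover have "E P a = E P b" using ab calculation unfolding lew_def by simp
    ultimately show ?thesis using E_inj[OF P, of a b] by simp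
  qed
  show "lew w P a c" if "lew w P a b \<and> lew w P b c"
  proof -
    have h1: "wt w a < wt w b \<or> (wt w a = wt w b \<and> E P a \<le> E P b)"
      and h2: "wt w b < wt w c \<or> (wt w b = wt w c \<and> E P b \<le> E P c)"
      using that unfolding lew_def by simp_all
    show ?thesis unfolding lew_def
    proof (cases "wt w a < wt w c")
      case True then show "wt w a < wt w c \<or> (wt w a = wt w c \<and> E P a \<le> E P c)" by simp
    next
      case False
      then have "wt w a = wt w b" "wt w b = wt w c" using h1 h2 by linarith+
      then have "E P a \<le> E P b" "E P b \<le> E P c" using h1 h2 by simp_all
      then show "wt w a < wt w c \<or> (wt w a = wt w c \<and> E P a \<le> E P c)"
        using \<open>wt w a = wt w b\<close> \<open>wt w b = wt w c\<close> by simp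
    qed
  qed
  show "lew w P a b \<or> lew w P b a" unfolding lew_def by linarith
  have "wt w (\<lambda>_. 0) = 0" by (simp add: wt_def)
  moreover have "E P (\<lambda>_. 0) = 1" by (simp add: E_def)
  ultimately show "lew w P (\<lambda>_. 0) a" using wt_nonneg[OF w, of a] E_pos[OF P(2), of a]
    unfolding lew_def by linarith
  show "lew w P (\<lambda>i. a i + c i) (\<lambda>i. b i + c i)" if ab: "lew w P a b"
  proof -
    have h: "wt w a < wt w b \<or> (wt w a = wt w b \<and> E P a \<le> E P b)" using ab unfolding lew_def by simp
    show ?thesis unfolding lew_def wt_add E_add
    proof (cases "wt w a < wt w b")
      case True then show "wt w a + wt w c < wt w b + wt w c \<or> (wt w a + wt w c = wt w b + wt w c \<and> E P a * E P c \<le> E P b * E P c)" by simp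
    next
      case False
      then have "wt w a = wt w b" "E P a \<le> E P b" using h by simp_all
      then show "wt w a + wt w c < wt w b + wt w c \<or> (wt w a + wt w c = wt w b + wt w c \<and> E P a * E P c \<le> E P b * E P c)" by simp
    qed
  qed
qed

lemma infinite_exps: "infinite (UNIV :: ('d \<Rightarrow> nat) set)"
proof
  assume "finite (UNIV :: ('d \<Rightarrow> nat) set)"
  then have "finite (range (\<lambda>k::nat. (\<lambda>_::'d. k)))" by (rule finite_subset[rotated]) auto
  moreover have "inj (\<lambda>k::nat. (\<lambda>_::'d. k))" by (rule injI) (metis)
  ultimately show False using finite_imageD by blast
qed

lemma initial_segment:
  fixes le :: "('d::finite \<Rightarrow> nat) \<Rightarrow> ('d \<Rightarrow> nat) \<Rightarrow> bool"
  assumes to: "term_order le"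
  shows "\<exists>S. finite S \<and> card S = k \<and> (\<forall>a\<in>S. \<forall>b. b \<notin> S \<longrightarrow> le a b)"
proof (induction k)
  case 0
  show ?case by (intro exI[of _ "{}"]) simp
next
  case (Suc k)
  obtain S where S: "finite S" "card S = k" "\<forall>a\<in>S. \<forall>b. b \<notin> S \<longrightarrow> le a b"
    using Suc.IH by (elim exE conjE)
  have "- S \<noteq> {}"
  proof
    assume "- S = {}"
    then have "S = UNIV" by blast
    then show False using S(1) infinite_exps[where 'd='d] by simp
  qed
  then obtain x where x: "x \<in> - S" by blast
  obtain m where m: "m \<in> - S" "\<And>y. (y, m) \<in> strict_rel le \<Longrightarrow> y \<notin> - S"
    using wfE_min[OF to_wf[OF to] x] by blast
  have mmin: "le m b" if "b \<notin> S" for b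
  proof -
    have "b \<in> - S" using that by simp
    then have "(b, m) \<notin> strict_rel le" using m(2) by blast
    then show ?thesis using to_total[OF to, of m b] to_refl[OF to, of m] by (auto simp: strict_rel_def)
  qed
  have "finite (insert m S)" "card (insert m S) = Suc k" using S m(1) by auto
  moreover have "\<forall>a\<in>insert m S. \<forall>b. b \<notin> insert m S \<longrightarrow> le a b" using S(3) mmin by auto
  ultimately show ?case by (intro exI[of _ "insert m S"] conjI)
qed

lemma std_exps_initial:
  fixes D :: "('d::finite \<Rightarrow> real) set"
  assumes to: "term_order le" and idf: "identifiable D S"
    and seg: "\<forall>a\<in>S. \<forall>b. b \<notin> S \<longrightarrow> le a b"
  shows "std_exps D le = S"
proof -
  have finS: "finite S" using idf unfolding identifiable_def by blast
  have lin: "\<And>c. (\<forall>x\<in>D. (\<Sum>\<alpha>\<in>S. c \<alpha> * mono x \<alpha>) = 0) \<Longrightarrow> (\<forall>\<alpha>\<in>S. c \<alpha> = 0)"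
    using idf unfolding identifiable_def by blast
  show ?thesis
  proof (intro set_eqI iffI)
    fix \<alpha> assume a: "\<alpha> \<in> std_exps D le"
    show "\<alpha> \<in> S"
    proof (rule ccontr)
      assume aS: "\<alpha> \<notin> S"
      obtain c where c: "\<forall>x\<in>D. mono x \<alpha> = (\<Sum>\<beta>\<in>S. c \<beta> * mono x \<beta>)"
        using Rep_of_identifiable[OF idf, of "\<lambda>x. mono x \<alpha>"] unfolding Rep_def by blast
      define p where "p = (\<lambda>\<gamma>. if \<gamma> = \<alpha> then 1 else if \<gamma> \<in> S then - c \<gamma> else (0::real))"
      have suppsub: "supp p \<subseteq> insert \<alpha> S" unfolding supp_def p_def by auto
      have finp: "finite (supp p)" using suppsub finS finite_subset by blast
      have ev: "poly_eval p x = 0" if x: "x \<in> D" for x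
      proof -
        have "poly_eval p x = (\<Sum>\<gamma>\<in>insert \<alpha> S. p \<gamma> * mono x \<gamma>)"
          unfolding poly_eval_def
          by (rule sum.mono_neutral_left) (use suppsub finS in \<open>auto simp: supp_def\<close>)
        also have "\<dots> = mono x \<alpha> + (\<Sum>\<gamma>\<in>S. - c \<gamma> * mono x \<gamma>)"
        proof -
          have "(\<Sum>\<gamma>\<in>S. p \<gamma> * mono x \<gamma>) = (\<Sum>\<gamma>\<in>S. - c \<gamma> * mono x \<gamma>)"
            by (rule sum.cong) (use aS in \<open>auto simp: p_def\<close>)
          then show ?thesis using aS finS by (simp add: p_def)
        qed
        also have "\<dots> = 0" using c x by (simp add: sum_negf)
        finally show ?thesis .
      qed
      have van: "p \<in> vanishing_ideal D"
        unfolding vanishing_ideal_def is_poly_def using finp ev by blast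
      have lead: "is_leading_exp le p \<alpha>"
        unfolding is_leading_exp_def
      proof (intro conjI allI impI)
        show "p \<alpha> \<noteq> 0" by (simp add: p_def)
        fix \<gamma> assume "p \<gamma> \<noteq> 0"
        then have "\<gamma> = \<alpha> \<or> \<gamma> \<in> S" by (auto simp: p_def split: if_splits)
        then show "le \<gamma> \<alpha>" using seg aS to_refl[OF to] by blast
      qed
      show False using a van lead unfolding std_exps_def by blast
    qed
  next
    fix \<alpha> assume aS: "\<alpha> \<in> S"
    show "\<alpha> \<in> std_exps D le"
      unfolding std_exps_def
    proof (intro CollectI notI, elim bexE exE conjE)
      fix p \<beta> assume p: "p \<in> vanishing_ideal D" and lead: "is_leading_exp le p \<beta>" and ba: "\<beta> \<le> \<alpha>"
      have lba: "le \<beta> \<alpha>" by (rule to_mono[OF to ba])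
      have bS: "\<beta> \<in> S"
      proof (rule ccontr)
        assume "\<beta> \<notin> S"
        then have "le \<alpha> \<beta>" using seg aS by blast
        then have "\<alpha> = \<beta>" using lba to_antisym[OF to] by blast
        then show False using aS \<open>\<beta> \<notin> S\<close> by simp
      qed
      have suppS: "supp p \<subseteq> S"
      proof
        fix \<gamma> assume "\<gamma> \<in> supp p"
        then have "le \<gamma> \<beta>" using lead unfolding supp_def is_leading_exp_def by blast
        show "\<gamma> \<in> S"
        proof (rule ccontr)
          assume "\<gamma> \<notin> S"
          then have "le \<beta> \<gamma>" using seg bS by blast
          then have "\<gamma> = \<beta>" using \<open>le \<gamma> \<beta>\<close> to_antisym[OF to] by blast
          then show False using bS \<open>\<gamma> \<notin> S\<close> by simp
        qed
      qed
      have "\<forall>x\<in>D. (\<Sum>\<gamma>\<in>S. p \<gamma> * mono x \<gamma>) = 0"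
      proof
        fix x assume x: "x \<in> D"
        have "(\<Sum>\<gamma>\<in>S. p \<gamma> * mono x \<gamma>) = poly_eval p x"
          unfolding poly_eval_def
          by (rule sum.mono_neutral_right) (use suppS finS in \<open>auto simp: supp_def\<close>)
        also have "\<dots> = 0" using p x unfolding vanishing_ideal_def by blast
        finally show "(\<Sum>\<gamma>\<in>S. p \<gamma> * mono x \<gamma>) = 0" .
      qed
      then have "p \<beta> = 0" using lin bS by blast
      then show False using lead unfolding is_leading_exp_def by blast
    qed
  qed
qed

lemma sum_compare:
  fixes f :: "'a \<Rightarrow> real"
  assumes T: "finite T" and S: "finite S" and card: "card S \<le> card T"
    and cmp: "\<And>a b. a \<in> S \<Longrightarrow> b \<in> T - S \<Longrightarrow> f a \<le> f b" and nn: "\<And>b. f b \<ge> 0"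
  shows "sum f S \<le> sum f T"
proof -
  have cS: "card S = card (S \<inter> T) + card (S - T)" by (rule card_Int_Diff[OF S])
  have cT: "card T = card (S \<inter> T) + card (T - S)" using card_Int_Diff[OF T, of S] by (simp add: Int_commute)
  have cc: "card (S - T) \<le> card (T - S)" using cS cT card by simp
  have sS: "sum f S = sum f (S \<inter> T) + sum f (S - T)" by (rule sum.Int_Diff[OF S])
  have sT: "sum f T = sum f (S \<inter> T) + sum f (T - S)" using sum.Int_Diff[OF T, of f S] by (simp add: Int_commute)
  have "sum f (S - T) \<le> sum f (T - S)"
  proof (cases "T - S = {}")
    case True
    then have "card (T - S) = 0" by (simp only: card.empty)
    then have "card (S - T) = 0" using cc by (simp only: le_zero_eq)
    then have "S - T = {}" using S by simp
    then have "sum f (S - T) = 0" by (simp only: sum.empty)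
    moreover have "0 \<le> sum f (T - S)" by (rule sum_nonneg) (use nn in auto)
    ultimately show ?thesis by linarith
  next
    case False
    define m where "m = Min (f ` (T - S))"
    have fin: "finite (f ` (T - S))" using T by simp
    have m_le: "m \<le> f b" if "b \<in> T - S" for b unfolding m_def using fin that by simp
    have m_in: "m \<in> f ` (T - S)" unfolding m_def using fin False by simp
    then obtain b0 where b0: "b0 \<in> T - S" "m = f b0" by blast
    have m_ge: "f a \<le> m" if "a \<in> S - T" for a using cmp[of a b0] that b0 by simp
    have "sum f (S - T) \<le> real (card (S - T)) * m" by (rule sum_bounded_above) (use m_ge in auto)
    also have "\<dots> \<le> real (card (T - S)) * m" using cc nn[of b0] b0 by (intro mult_right_mono) auto
    also have "\<dots> \<le> sum f (T - S)" by (rule sum_bounded_below) (use m_le in auto)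
    finally show ?thesis .
  qed
  then show ?thesis using sS sT by simp
qed


theorem theorem4:
  fixes n :: nat and w :: "'d::finite \<Rightarrow> real"
  assumes "n \<ge> 1" and "\<forall>i. w i > 0"
  shows "\<exists>(D :: ('d \<Rightarrow> real) set) L.
           finite D \<and> card D = n \<and> generic D \<and> L \<in> alg_fan D \<and>
           (\<forall>(D' :: ('d \<Rightarrow> real) set) L'.
              finite D' \<and> card D' = n \<and> L' \<in> alg_fan D' \<longrightarrow>
              aberration n w L \<le> aberration n w L')"
proof -
  obtain P :: "'d \<Rightarrow> nat" where P: "inj P" "\<forall>i. prime (P i)"
    using exists_prime_inj by (elim exE conjE)
  define le where "le = lew w P"
  have to: "term_order le" unfolding le_def by (rule lew_term_order[OF assms(2) P])
  obtain S where S: "finite S" "card S = n" "\<forall>a\<in>S. \<forall>b. b \<notin> S \<longrightarrow> le a b"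
    using initial_segment[OF to, of n] by (elim exE conjE)
  define D where "D = pt P ` {..<n}"
  have finD: "finite D" unfolding D_def by simp
  have cardD: "card D = n" unfolding D_def
    using card_image[OF inj_on_subset[OF pt_inj[OF P(2)]]] by simp
  have idS: "identifiable D S" unfolding D_def by (rule design_identifies[OF P S(1) S(2)])
  have LS: "std_exps D le = S" by (rule std_exps_initial[OF to idS S(3)])
  have gen: "generic D"
    unfolding generic_def
  proof (intro allI impI)
    fix L :: "('d \<Rightarrow> nat) set" assume "corner_cut (card D) L"
    then have "finite L" "card L = n" using cardD unfolding corner_cut_def by auto
    then show "identifiable D L" unfolding D_def by (rule design_identifies[OF P])
  qed
  have fan: "S \<in> alg_fan D" unfolding alg_fan_def using to LS by blast
  have opt: "aberration n w S \<le> aberration n w L'"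
    if D': "finite D'" "card D' = n" and L': "L' \<in> alg_fan D'" for D' :: "('d \<Rightarrow> real) set" and L' :: "('d \<Rightarrow> nat) set"
  proof -
    obtain le' where le': "term_order le'" "L' = std_exps D' le'"
      using L' unfolding alg_fan_def by blast
    have finL: "finite L'" using std_exps_finite[OF D'(1) le'(1)] le'(2) by simp
    have allm: "\<And>\<alpha>. Rep D' L' (\<lambda>x. mono x \<alpha>)" using reduce[OF D'(1) le'(1)] le'(2) by simp
    have "card D' \<le> card L'"
      by (rule card_le_of_Rep[OF D'(1) finL]) (rule Rep_all[OF allm finL D'(1)])
    then have cardL: "card S \<le> card L'" using S(2) D'(2) by simp
    have cmp: "wt w a \<le> wt w b" if "a \<in> S" "b \<in> L' - S" for a b
    proof -
      have "lew w P a b" using S(3) that unfolding le_def by blast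
      then show ?thesis unfolding lew_def by auto
    qed
    have "sum (wt w) S \<le> sum (wt w) L'"
      by (rule sum_compare[OF finL S(1) cardL cmp wt_nonneg[OF assms(2)]])
    then show ?thesis unfolding aberration_def wt_def[symmetric]
      by (intro mult_left_mono) auto
  qed
  show ?thesis
    by (rule exI[of _ D], rule exI[of _ S]) (use finD cardD gen fan opt in blast)
qed


end
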